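(* Let $A:\Omega\to\mathbb C^{d\times d}$, $b,c:\Omega\to\mathbb C^d$, $V:\Omega\to\mathbb R_+$ and $p>1$, $q=p/(p-1)$. Suppose that $\Gamma_p^{A,b,c,V}(x,\xi)\ge0$ for almost all $x\in\Omega$ and all $\xi\in\mathbb C^d$. Then for almost all $x\in\Omega$ and all $\alpha,\beta\in\mathbb R^d$, $$\tfrac{4}{pq}\langle \Re A(x)\alpha,\alpha\rangle+\langle\Re A(x)\beta,\beta\rangle+2\langle(p^{-1}\Im A(x)+q^{-1}\Im A(x)^* )\alpha,\beta\rangle+\langle\Im(b(x)+c(x)),\beta\rangle+2\Big\langle\Re\Big(\tfrac{b(x)}p+\tfrac{c(x)}q\Big),\alpha\Big\rangle+V(x)\ge0,$$ i.e. the Cialdea–Maz'ya condition holds with $\theta=\nu=1$.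
   Context: $\Omega\subseteq\mathbb R^d$ open. On $\mathbb C^d$, $\langle \xi,\sigma\rangle=\sum_j\xi_j\overline{\sigma_j}$; in the displayed inequality the brackets are the real inner product on $\mathbb R^d$, and $\Re A,\Im A$ denote the entrywise real and imaginary parts of the matrix, $A^*$ its conjugate transpose, and $\Re,\Im$ of vectors are taken componentwise. $\mathcal{J}_p\xi=\frac p2(\xi+(1-\frac2p)\overline\xi)$ and $\Gamma_p^{A,b,c,V}(x,\xi)=\Re\langle A(x)\xi,\mathcal J_p\xi\rangle+\Re\langle b(x)+\mathcal J_pc(x),\xi\rangle+V(x)$. *)

theory Defs
  imports "HOL-Analysis.Analysis"
begin

definition cinner :: "complex ^ 'n \<Rightarrow> complex ^ 'n \<Rightarrow> complex" where
  "cinner \<xi> \<sigma> = (\<Sum>j\<in>UNIV. \<xi> $ j * cnj (\<sigma> $ j))"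

definition Jp :: "real \<Rightarrow> complex ^ 'n \<Rightarrow> complex ^ 'n" where
  "Jp p \<xi> = (\<chi> j. complex_of_real (p / 2) *
      (\<xi> $ j + complex_of_real (1 - 2 / p) * cnj (\<xi> $ j)))"

definition Gamma_p ::
  "real \<Rightarrow> ('x \<Rightarrow> complex ^ 'n ^ 'n) \<Rightarrow> ('x \<Rightarrow> complex ^ 'n) \<Rightarrow> ('x \<Rightarrow> complex ^ 'n)
    \<Rightarrow> ('x \<Rightarrow> real) \<Rightarrow> 'x \<Rightarrow> complex ^ 'n \<Rightarrow> real" where
  "Gamma_p p A b c V x \<xi> =
     Re (cinner (A x *v \<xi>) (Jp p \<xi>)) + Re (cinner (b x + Jp p (c x)) \<xi>) + V x"

definition mat_Re :: "complex ^ 'n ^ 'm \<Rightarrow> real ^ 'n ^ 'm" where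
  "mat_Re M = (\<chi> i j. Re (M $ i $ j))"

definition mat_Im :: "complex ^ 'n ^ 'm \<Rightarrow> real ^ 'n ^ 'm" where
  "mat_Im M = (\<chi> i j. Im (M $ i $ j))"

definition conj_transpose :: "complex ^ 'n ^ 'm \<Rightarrow> complex ^ 'm ^ 'n" where
  "conj_transpose M = (\<chi> i j. cnj (M $ j $ i))"

definition vec_Re :: "complex ^ 'n \<Rightarrow> real ^ 'n" where
  "vec_Re v = (\<chi> i. Re (v $ i))"

definition vec_Im :: "complex ^ 'n \<Rightarrow> real ^ 'n" where
  "vec_Im v = (\<chi> i. Im (v $ i))"

end

theory Submission
  imports Defs
begin

lemma quad:
  fixes M :: "complex ^ 'n ^ 'n" and \<alpha> \<beta> :: "real ^ 'n" and p q :: real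
  assumes p: "p > 1" and q: "q = p / (p - 1)"
  defines "\<xi> \<equiv> (\<chi> j. complex_of_real (2 / p * \<alpha> $ j) + \<i> * complex_of_real (\<beta> $ j))"
  shows "Re (cinner (M *v \<xi>) (Jp p \<xi>)) =
           4 / (p * q) * ((mat_Re M *v \<alpha>) \<bullet> \<alpha>)
         + (mat_Re M *v \<beta>) \<bullet> \<beta>
         + 2 * ((((1 / p) *\<^sub>R mat_Im M + (1 / q) *\<^sub>R mat_Im (conj_transpose M)) *v \<alpha>) \<bullet> \<beta>)"
proof -
  have q1: "1/q = (p-1)/p" "4/(p*q) = 4*(p-1)/p^2" using p by (auto simp: q field_simps power2_eq_square)
  have J: "Jp p \<xi> $ j = complex_of_real ((p-1) * (2 / p * \<alpha> $ j)) + \<i> * complex_of_real (\<beta> $ j)" for j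
    using p unfolding Jp_def \<xi>_def by (simp add: complex_eq_iff field_simps)
  have L: "Re (cinner (M *v \<xi>) (Jp p \<xi>)) = (\<Sum>j\<in>UNIV. \<Sum>k\<in>UNIV.
      (p-1) * Re (M$j$k) * (2/p*\<alpha>$k) * (2/p*\<alpha>$j) - Im (M$j$k) * \<beta>$k * ((p-1)*(2/p*\<alpha>$j))
      + Im (M$j$k) * (2/p*\<alpha>$k) * \<beta>$j + Re (M$j$k) * \<beta>$k * \<beta>$j)"
    unfolding cinner_def matrix_vector_mult_def Re_sum
  proof (rule sum.cong[OF refl])
    fix j
    show "Re ((\<chi> i. \<Sum>k\<in>UNIV. M $ i $ k * \<xi> $ k) $ j * cnj (Jp p \<xi> $ j)) = (\<Sum>k\<in>UNIV.
      (p-1) * Re (M$j$k) * (2/p*\<alpha>$k) * (2/p*\<alpha>$j) - Im (M$j$k) * \<beta>$k * ((p-1)*(2/p*\<alpha>$j))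
      + Im (M$j$k) * (2/p*\<alpha>$k) * \<beta>$j + Re (M$j$k) * \<beta>$k * \<beta>$j)"
      unfolding vec_lambda_beta sum_distrib_right Re_sum J
      by (rule sum.cong[OF refl]) (use p in \<open>simp add: \<xi>_def field_simps\<close>)
  qed
  have R1: "(mat_Re M *v \<alpha>) \<bullet> \<alpha> = (\<Sum>j\<in>UNIV. \<Sum>k\<in>UNIV. Re (M$j$k) * \<alpha>$k * \<alpha>$j)"
    unfolding inner_vec_def matrix_vector_mult_def mat_Re_def by (simp add: sum_distrib_right)
  have R2: "(mat_Re M *v \<beta>) \<bullet> \<beta> = (\<Sum>j\<in>UNIV. \<Sum>k\<in>UNIV. Re (M$j$k) * \<beta>$k * \<beta>$j)"
    unfolding inner_vec_def matrix_vector_mult_def mat_Re_def by (simp add: sum_distrib_right)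
  have R3: "(((1 / p) *\<^sub>R mat_Im M + (1 / q) *\<^sub>R mat_Im (conj_transpose M)) *v \<alpha>) \<bullet> \<beta>
     = (\<Sum>j\<in>UNIV. \<Sum>k\<in>UNIV. (1/p) * Im (M$j$k) * \<alpha>$k * \<beta>$j)
     - (\<Sum>j\<in>UNIV. \<Sum>k\<in>UNIV. (1/q) * Im (M$k$j) * \<alpha>$k * \<beta>$j)"
    unfolding inner_vec_def matrix_vector_mult_def mat_Im_def conj_transpose_def
    by (simp add: sum_distrib_left sum_distrib_right algebra_simps sum.distrib sum_subtractf)
  have S: "(\<Sum>j\<in>UNIV. \<Sum>k\<in>UNIV. (1/q) * Im (M$k$j) * \<alpha>$k * \<beta>$j)
      = (\<Sum>j\<in>UNIV. \<Sum>k\<in>UNIV. (1/q) * Im (M$j$k) * \<alpha>$j * \<beta>$k)"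
    by (rule sum.swap)
  show ?thesis
    unfolding L R1 R2 R3 S unfolding q1 sum_distrib_left sum_subtractf[symmetric] sum.distrib[symmetric]
    by (rule sum.cong[OF refl], rule sum.cong[OF refl]) (use p in \<open>simp add: field_simps power2_eq_square\<close>)
qed


lemma lin:
  fixes b c :: "complex ^ 'n" and \<alpha> \<beta> :: "real ^ 'n" and p q :: real
  assumes p: "p > 1" and q: "q = p / (p - 1)"
  defines "\<xi> \<equiv> (\<chi> j. complex_of_real (2 / p * \<alpha> $ j) + \<i> * complex_of_real (\<beta> $ j))"
  shows "Re (cinner (b + Jp p c) \<xi>) =
           vec_Im (b + c) \<bullet> \<beta> + 2 * (vec_Re ((1 / p) *\<^sub>R b + (1 / q) *\<^sub>R c) \<bullet> \<alpha>)"
proof -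
  have q1: "1/q = (p-1)/p" using p by (auto simp: q field_simps)
  have J: "Jp p c $ j = complex_of_real ((p-1) * Re (c $ j)) + \<i> * complex_of_real (Im (c $ j))" for j
    using p unfolding Jp_def by (simp add: complex_eq_iff field_simps)
  show ?thesis
    unfolding cinner_def inner_vec_def vec_Im_def vec_Re_def q1 Re_sum sum_distrib_left sum.distrib[symmetric]
    by (rule sum.cong[OF refl]) (use p in \<open>simp add: J \<xi>_def field_simps\<close>)
qed

theorem proposition5p4:
  fixes \<Omega> :: "(real ^ 'n) set"
    and A :: "real ^ 'n \<Rightarrow> complex ^ 'n ^ 'n"
    and b c :: "real ^ 'n \<Rightarrow> complex ^ 'n"
    and V :: "real ^ 'n \<Rightarrow> real"
    and p q :: real
  assumes "open \<Omega>"
    and "\<And>x. x \<in> \<Omega> \<Longrightarrow> V x \<ge> 0"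
    and "p > 1"
    and "q = p / (p - 1)"
    and "AE x in lebesgue. x \<in> \<Omega> \<longrightarrow> (\<forall>\<xi>. Gamma_p p A b c V x \<xi> \<ge> 0)"
  shows "AE x in lebesgue. x \<in> \<Omega> \<longrightarrow> (\<forall>\<alpha> \<beta> :: real ^ 'n.
           4 / (p * q) * ((mat_Re (A x) *v \<alpha>) \<bullet> \<alpha>)
         + (mat_Re (A x) *v \<beta>) \<bullet> \<beta>
         + 2 * ((((1 / p) *\<^sub>R mat_Im (A x) + (1 / q) *\<^sub>R mat_Im (conj_transpose (A x))) *v \<alpha>) \<bullet> \<beta>)
         + (vec_Im (b x + c x) \<bullet> \<beta>)
         + 2 * (vec_Re ((1 / p) *\<^sub>R b x + (1 / q) *\<^sub>R c x) \<bullet> \<alpha>)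
         + V x \<ge> 0)"
proof -
  show ?thesis
  proof (rule eventually_mono[OF assms(5)], intro impI allI)
    fix x \<alpha> \<beta>
    assume H: "x \<in> \<Omega> \<longrightarrow> (\<forall>\<xi>. Gamma_p p A b c V x \<xi> \<ge> 0)" and x: "x \<in> \<Omega>"
    define \<xi> where "\<xi> \<equiv> (\<chi> j. complex_of_real (2 / p * \<alpha> $ j) + \<i> * complex_of_real (\<beta> $ j)) :: complex ^ 'n"
    have "Gamma_p p A b c V x \<xi> \<ge> 0" using H x by blast
    then show "4 / (p * q) * ((mat_Re (A x) *v \<alpha>) \<bullet> \<alpha>)
         + (mat_Re (A x) *v \<beta>) \<bullet> \<beta>
         + 2 * ((((1 / p) *\<^sub>R mat_Im (A x) + (1 / q) *\<^sub>R mat_Im (conj_transpose (A x))) *v \<alpha>) \<bullet> \<beta>)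
         + (vec_Im (b x + c x) \<bullet> \<beta>)
         + 2 * (vec_Re ((1 / p) *\<^sub>R b x + (1 / q) *\<^sub>R c x) \<bullet> \<alpha>)
         + V x \<ge> 0"
      unfolding Gamma_p_def \<xi>_def quad[OF assms(3,4)] lin[OF assms(3,4)] by linarith
  qed
qed

end
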